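(* Let $\Sigma:\ \dot x=-(A-M)x+d$ be $\gamma$-robust for some $\gamma>0$ and let $u=(A-M)^{-1}\mathbb{1}$. Let $a_{N+1}>0$ and define $\bar A=\begin{bmatrix}A&0\\0&a_{N+1}\end{bmatrix}$, $\bar M=\begin{bmatrix}M&0\\0&0\end{bmatrix}$ (adding node $N+1$ with no incoming or outgoing edges). Then the change $\Sigma\mapsto\bar\Sigma:\ \dot{\bar x}=-(\bar A-\bar M)\bar x+\bar d$ is scalable if and only if $a_{N+1}\ge\big(\max_{i\in\{1,\dots,N\}}u_i\big)^{-1}$.
   Context: $A=\mathrm{diag}(a_1,\dots,a_N)$ with all $a_i>0$, $M\in\mathbb{R}^{N\times N}$ has zero diagonal and nonnegative off-diagonal entries; $\mathbb{1}$ is the all-ones vector. For $\gamma>0$, a system $\dot x=-(A-M)x+d$ is $\gamma$-robust if $-(A-M)$ is Hurwitz and for every bounded disturbance $d$, the solution with $x(0)=0$ satisfies $\max_{i}|x_i(t)|\le\gamma\max_i\sup_{s\ge0}|d_i(s)|$ for all $t\ge0$. A structural change $\Sigma\mapsto\bar\Sigma$ is called scalable if, for every $\gamma>0$ for which $\Sigma$ is $\gamma$-robust, $\bar\Sigma$ is $\gamma$-robust. *)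

theory Defs
  imports "HOL-Analysis.Analysis" "Jordan_Normal_Form.Matrix" "Jordan_Normal_Form.Char_Poly"
begin

text \<open>Matrices of varying size N are Jordan_Normal_Form matrices (type real mat),
  vectors are real vec; indices are 0-based (i < N).\<close>

definition hurwitz :: "real mat \<Rightarrow> bool" where
  "hurwitz B \<longleftrightarrow> (\<forall>z. eigenvalue (map_mat complex_of_real B) z \<longrightarrow> Re z < 0)"

definition is_solution ::
  "nat \<Rightarrow> real mat \<Rightarrow> (real \<Rightarrow> real vec) \<Rightarrow> (real \<Rightarrow> real vec) \<Rightarrow> bool" where
  "is_solution n F d x \<longleftrightarrow>
     (\<forall>t. dim_vec (x t) = n) \<and> x 0 = 0\<^sub>v n \<and>
     (\<forall>t\<ge>0. \<forall>i<n. ((\<lambda>s. x s $ i) has_real_derivative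
                         (- (F *\<^sub>v x t) $ i + d t $ i)) (at t within {0..}))"

definition bounded_disturbance :: "nat \<Rightarrow> (real \<Rightarrow> real vec) \<Rightarrow> bool" where
  "bounded_disturbance n d \<longleftrightarrow>
     (\<forall>i<n. continuous_on {0..} (\<lambda>t. d t $ i)) \<and> (\<exists>K. \<forall>t\<ge>0. \<forall>i<n. \<bar>d t $ i\<bar> \<le> K)"

definition gamma_robust :: "nat \<Rightarrow> real mat \<Rightarrow> real \<Rightarrow> bool" where
  "gamma_robust n F \<gamma> \<longleftrightarrow>
     hurwitz (- F) \<and>
     (\<forall>d x. bounded_disturbance n d \<longrightarrow> is_solution n F d x \<longrightarrow>
        (\<forall>t\<ge>0. \<forall>i<n. \<bar>x t $ i\<bar> \<le> \<gamma> * Max ((\<lambda>j. SUP s\<in>{0..}. \<bar>d s $ j\<bar>) ` {..<n})))"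

definition scalable :: "nat \<Rightarrow> real mat \<Rightarrow> nat \<Rightarrow> real mat \<Rightarrow> bool" where
  "scalable n F n' F' \<longleftrightarrow> (\<forall>\<gamma>>0. gamma_robust n F \<gamma> \<longrightarrow> gamma_robust n' F' \<gamma>)"

end

theory Submission
  imports Defs "HOL-Real_Asymp.Real_Asymp"
begin

lemma mv: fixes F :: "'a::comm_semiring_0 mat"
  assumes "F \<in> carrier_mat n n" "v \<in> carrier_vec n" "i < n"
  shows "(F *\<^sub>v v) $ i = (\<Sum>j<n. F $$ (i,j) * v $ j)"
  using assms by (auto simp: scalar_prod_def row_def atLeast0LessThan intro!: sum.cong)

lemma min_cont:
  fixes f :: "nat \<Rightarrow> real \<Rightarrow> real"
  assumes "finite I" "I \<noteq> {}" "\<And>i. i \<in> I \<Longrightarrow> continuous_on S (f i)"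
  shows "continuous_on S (\<lambda>t. Min ((\<lambda>i. f i t) ` I))"
  using assms
proof (induction I rule: finite_ne_induct)
  case (singleton x) then show ?case by simp
next
  case (insert x F)
  have "continuous_on S (\<lambda>t. min (f x t) (Min ((\<lambda>i. f i t) ` F)))"
    using insert by (intro continuous_on_min) auto
  moreover have "\<And>t. Min ((\<lambda>i. f i t) ` insert x F) = min (f x t) (Min ((\<lambda>i. f i t) ` F))"
    using insert by (simp add: Min_insert)
  ultimately show ?case by simp
qed

lemma det_cont:
  fixes B :: "real \<Rightarrow> real mat"
  assumes "\<And>s. B s \<in> carrier_mat n n" "\<And>i j. i < n \<Longrightarrow> j < n \<Longrightarrow> continuous_on S (\<lambda>s. B s $$ (i,j))"
  shows "continuous_on S (\<lambda>s. det (B s))"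
proof -
  have "continuous_on S (\<lambda>s. \<Sum>p \<in> {p. p permutes {0..<n}}. signof p * (\<Prod>i = 0..<n. B s $$ (i, p i)))"
  proof (intro continuous_on_sum continuous_on_mult continuous_on_const continuous_on_prod)
    fix p i assume "p \<in> {p. p permutes {0..<n}}" "i \<in> {0..<n}"
    then have "p i < n" using permutes_in_image by fastforce
    then show "continuous_on S (\<lambda>s. B s $$ (i, p i))" using assms(2) \<open>i \<in> _\<close> by auto
  qed
  then show ?thesis using det_def'[OF assms(1)] by simp
qed



lemma hit:
  fixes z z' :: "real \<Rightarrow> nat \<Rightarrow> real"
  assumes n: "n > 0"
  and z0: "\<forall>i<n. z 0 i > 0"
  and der: "\<forall>t\<ge>0. \<forall>i<n. ((\<lambda>s. z s i) has_real_derivative z' t i) (at t within {0..})"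
  and bd: "\<forall>t\<ge>0. \<forall>i<n. z t i = 0 \<longrightarrow> (\<forall>j<n. z t j \<ge> 0) \<longrightarrow> z' t i > 0"
  shows "\<forall>t\<ge>0. \<forall>i<n. z t i > 0"
proof (rule ccontr)
  assume "\<not> ?thesis"
  then obtain t1 i1 where t1: "t1 \<ge> 0" "i1 < n" "z t1 i1 \<le> 0" by force
  define m where "m t = Min ((\<lambda>i. z t i) ` {..<n})" for t
  have ne: "(\<lambda>i. z t i) ` {..<n} \<noteq> {}" for t using n by auto
  have cont: "continuous_on {0..} m"
    unfolding m_def using n der
    by (intro min_cont[where f="\<lambda>i t. z t i"]) (auto intro!: DERIV_continuous_on)
  have m0: "m 0 > 0" unfolding m_def using z0 ne by auto
  have mt1: "m t1 \<le> 0" unfolding m_def using t1 by (meson Min_le dual_order.trans finite_imageI finite_lessThan image_eqI lessThan_iff)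
  define S where "S = {0..t1} \<inter> m -` {..0}"
  have clS: "closed S" unfolding S_def
    by (rule continuous_closed_preimage) (auto intro: continuous_on_subset[OF cont])
  have t1S: "t1 \<in> S" using t1 mt1 by (auto simp: S_def)
  have bS: "bdd_below S" unfolding S_def by (auto intro: bdd_belowI[of _ 0])
  define \<tau> where "\<tau> = Inf S"
  have tS: "\<tau> \<in> S" unfolding \<tau>_def using closed_contains_Inf[OF _ bS clS] t1S by auto
  then have t0: "0 \<le> \<tau>" "\<tau> \<le> t1" "m \<tau> \<le> 0" by (auto simp: S_def)
  have lt: "m t > 0" if "0 \<le> t" "t < \<tau>" for t
  proof (rule ccontr)
    assume "\<not> m t > 0"
    then have "t \<in> S" using that t0 by (auto simp: S_def)
    then have "\<tau> \<le> t" unfolding \<tau>_def by (rule cInf_lower[OF _ bS])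
    then show False using that by simp
  qed
  have tpos: "\<tau> > 0" using t0 m0 by (metis order_le_less not_le)
  have mtau: "m \<tau> = 0"
  proof (rule ccontr)
    assume "m \<tau> \<noteq> 0"
    then have "m \<tau> < 0" using t0 by simp
    moreover have "continuous_on {0..\<tau>} m" by (rule continuous_on_subset[OF cont]) auto
    ultimately obtain x where "0 \<le> x" "x \<le> \<tau>" "m x = 0"
      using IVT2'[of m \<tau> 0 0] m0 t0 by auto
    then show False using lt[of x] \<open>m \<tau> < 0\<close> by (cases "x = \<tau>") auto
  qed
  have "m \<tau> \<in> (\<lambda>i. z \<tau> i) ` {..<n}" unfolding m_def using ne by (intro Min_in) auto
  then obtain i where i: "i < n" "z \<tau> i = 0" using mtau by auto
  have allj: "\<forall>j<n. z \<tau> j \<ge> 0" using mtau unfolding m_def by (metis Min_le finite_imageI finite_lessThan image_eqI lessThan_iff)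
  have pos: "z' \<tau> i > 0" using bd t0 i allj by auto
  have "((\<lambda>s. z s i) has_real_derivative z' \<tau> i) (at \<tau> within {0<..})"
  proof -
    have "((\<lambda>s. z s i) has_real_derivative z' \<tau> i) (at \<tau> within {0..})" using der t0 i by blast
    then show ?thesis by (rule has_field_derivative_subset) auto
  qed
  then have D: "((\<lambda>s. z s i) has_real_derivative z' \<tau> i) (at \<tau>)"
    using tpos at_within_open[of \<tau> "{0<..}"] by simp
  obtain d where d: "d > 0" "\<forall>h>0. h < d \<longrightarrow> z (\<tau> - h) i < z \<tau> i"
    using DERIV_pos_inc_left[OF D pos] by auto
  define h where "h = min (d/2) (\<tau>/2)"
  have h: "h > 0" "h < d" "h < \<tau>" using d tpos by (auto simp: h_def)
  then have "z (\<tau> - h) i < 0" using d i by auto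
  moreover have "m (\<tau> - h) \<le> z (\<tau> - h) i" unfolding m_def using i by (auto intro: Min_le)
  ultimately show False using lt[of "\<tau> - h"] h by auto
qed



lemma sup_bounds:
  fixes d :: "real \<Rightarrow> real Matrix.vec"
  assumes bd: "bounded_disturbance n d" and t: "t \<ge> 0" and j: "j < n"
  shows "\<bar>d t $ j\<bar> \<le> Max ((\<lambda>j. SUP s\<in>{0..}. \<bar>d s $ j\<bar>) ` {..<n})"
proof -
  obtain K where K: "\<forall>t\<ge>0. \<forall>i<n. \<bar>d t $ i\<bar> \<le> K" using bd unfolding bounded_disturbance_def by auto
  have "bdd_above ((\<lambda>s. \<bar>d s $ j\<bar>) ` {0..})" using K j by (intro bdd_aboveI2[of _ _ K]) auto
  then have "\<bar>d t $ j\<bar> \<le> (SUP s\<in>{0..}. \<bar>d s $ j\<bar>)" using t by (intro cSUP_upper) auto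
  also have "\<dots> \<le> Max ((\<lambda>j. SUP s\<in>{0..}. \<bar>d s $ j\<bar>) ` {..<n})" using j by (intro Max_ge) auto
  finally show ?thesis .
qed

lemma robust_bound:
  fixes F :: "real mat" and w :: "real Matrix.vec" and d x :: "real \<Rightarrow> real Matrix.vec"
  assumes F: "F \<in> carrier_mat n n" and n: "n > 0"
  and Z: "\<forall>i<n. \<forall>j<n. i \<noteq> j \<longrightarrow> F $$ (i,j) \<le> 0"
  and w: "w \<in> carrier_vec n" "\<forall>i<n. w $ i > 0" "F *\<^sub>v w = vec n (\<lambda>_. 1)"
  and bd: "bounded_disturbance n d" and sol: "is_solution n F d x"
  shows "\<forall>t\<ge>0. \<forall>i<n. \<bar>x t $ i\<bar> \<le> w $ i * Max ((\<lambda>j. SUP s\<in>{0..}. \<bar>d s $ j\<bar>) ` {..<n})"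
proof -
  define D where "D = Max ((\<lambda>j. SUP s\<in>{0..}. \<bar>d s $ j\<bar>) ` {..<n})"
  have dD: "\<bar>d t $ j\<bar> \<le> D" if "t \<ge> 0" "j < n" for t j
    using sup_bounds[OF bd that] unfolding D_def .
  have D0: "D \<ge> 0" using dD[of 0 0] n by auto
  have xdim: "x t \<in> carrier_vec n" for t using sol unfolding is_solution_def carrier_vec_def by auto
  have x0: "x 0 $ i = 0" if "i < n" for i using sol that unfolding is_solution_def by auto
  have xder: "((\<lambda>s. x s $ i) has_real_derivative (- (F *\<^sub>v x t) $ i + d t $ i)) (at t within {0..})"
    if "t \<ge> 0" "i < n" for t i using sol that unfolding is_solution_def by auto
  have Fw: "(\<Sum>j<n. F $$ (i,j) * w $ j) = 1" if "i < n" for i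
    using mv[OF F w(1) that] w(3) that by simp
  have key: "\<sigma> * x t $ i < (D + \<epsilon>) * w $ i"
    if sig: "\<sigma> = 1 \<or> \<sigma> = -1" and e: "\<epsilon> > 0" and t: "t \<ge> 0" and i: "i < n" for \<sigma> \<epsilon> t i
  proof -
    define z where "z t i = (D + \<epsilon>) * w $ i - \<sigma> * x t $ i" for t i
    define z' where "z' t i = - \<sigma> * (- (F *\<^sub>v x t) $ i + d t $ i)" for t i
    have "\<forall>t\<ge>0. \<forall>i<n. z t i > 0"
    proof (rule hit[OF n])
      show "\<forall>i<n. 0 < z 0 i"
      proof (intro allI impI)
        fix i assume i: "i < n"
        have "D + \<epsilon> > 0" using D0 e by linarith
        then have "(D + \<epsilon>) * w $ i > 0" using w(2) i by simp
        then show "0 < z 0 i" unfolding z_def using x0[OF i] by simp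
      qed
      show "\<forall>t\<ge>0. \<forall>i<n. ((\<lambda>s. z s i) has_real_derivative z' t i) (at t within {0..})"
      proof (intro allI impI)
        fix t i assume ti: "t \<ge> (0::real)" "i < n"
        have "((\<lambda>s. (D + \<epsilon>) * w $ i - \<sigma> * x s $ i) has_real_derivative
            (0 - \<sigma> * (- (F *\<^sub>v x t) $ i + d t $ i))) (at t within {0..})"
          by (intro DERIV_diff DERIV_const DERIV_cmult xder[OF ti])
        then show "((\<lambda>s. z s i) has_real_derivative z' t i) (at t within {0..})"
          unfolding z_def z'_def by simp
      qed
      show "\<forall>t\<ge>0. \<forall>i<n. z t i = 0 \<longrightarrow> (\<forall>j<n. 0 \<le> z t j) \<longrightarrow> 0 < z' t i"
      proof (intro allI impI)
        fix t i assume t: "t \<ge> (0::real)" and i: "i < n" and zi: "z t i = 0" and zj: "\<forall>j<n. 0 \<le> z t j"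
        have sx: "\<sigma> * x t $ j = (D + \<epsilon>) * w $ j - z t j" for j unfolding z_def by simp
        have "\<sigma> * (F *\<^sub>v x t) $ i = (\<Sum>j<n. F $$ (i,j) * (\<sigma> * x t $ j))"
          unfolding mv[OF F xdim i] by (simp add: sum_distrib_left algebra_simps)
        also have "\<dots> = (D + \<epsilon>) * (\<Sum>j<n. F $$ (i,j) * w $ j) - (\<Sum>j<n. F $$ (i,j) * z t j)"
          unfolding sx by (simp add: sum_distrib_left sum_subtractf algebra_simps)
        also have "\<dots> = (D + \<epsilon>) - (\<Sum>j<n. F $$ (i,j) * z t j)" using Fw[OF i] by simp
        finally have eq: "\<sigma> * (F *\<^sub>v x t) $ i = (D + \<epsilon>) - (\<Sum>j<n. F $$ (i,j) * z t j)" .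
        have "(\<Sum>j<n. F $$ (i,j) * z t j) \<le> 0"
        proof (rule sum_nonpos)
          fix j assume "j \<in> {..<n}"
          then show "F $$ (i,j) * z t j \<le> 0" using Z zi zj i
            by (cases "i = j") (auto intro: mult_nonpos_nonneg)
        qed
        moreover have "\<sigma> * d t $ i \<le> D" using dD[OF t i] sig by auto
        ultimately show "0 < z' t i" unfolding z'_def using eq e by (simp add: algebra_simps)
      qed
    qed
    then show ?thesis using t i unfolding z_def by auto
  qed
  show ?thesis unfolding D_def[symmetric]
  proof (intro allI impI)
    fix t i assume t: "t \<ge> (0::real)" and i: "i < n"
    have wi: "w $ i > 0" using w(2) i by auto
    have le: "\<sigma> * x t $ i \<le> D * w $ i" if sig: "\<sigma> = 1 \<or> \<sigma> = -1" for \<sigma>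
    proof (rule field_le_epsilon)
      fix e :: real assume e: "e > 0"
      have "\<sigma> * x t $ i < (D + e / w $ i) * w $ i" using key[OF sig _ t i, of "e / w $ i"] e wi by auto
      also have "\<dots> = D * w $ i + e" using wi by (simp add: field_simps)
      finally show "\<sigma> * x t $ i \<le> D * w $ i + e" by simp
    qed
    show "\<bar>x t $ i\<bar> \<le> w $ i * D" using le[of 1] le[of "-1"] by (auto simp: abs_if mult.commute)
  qed
qed

lemma lower:
  fixes F :: "real mat" and w :: "real Matrix.vec"
  assumes F: "F \<in> carrier_mat n n"
  and w: "w \<in> carrier_vec n" "F *\<^sub>v w = vec n (\<lambda>_. 1)"
  and rob: "gamma_robust n F \<gamma>" and g: "\<gamma> > 0"
  shows "\<forall>i<n. \<bar>w $ i\<bar> \<le> \<gamma>"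
proof (intro allI impI)
  fix i assume i: "i < n"
  define c where "c = 1 / (1 + (\<Sum>j<n. \<bar>w $ j\<bar>))"
  have S0: "(\<Sum>j<n. \<bar>w $ j\<bar>) \<ge> 0" by (simp add: sum_nonneg)
  have "1 + (\<Sum>j<n. \<bar>w $ j\<bar>) > 0" using S0 by linarith
  then have c0: "c > 0" unfolding c_def by simp
  have cw: "c * \<bar>w $ j\<bar> < 1" if "j < n" for j
  proof -
    have "\<bar>w $ j\<bar> \<le> (\<Sum>j<n. \<bar>w $ j\<bar>)" using that by (intro member_le_sum) auto
    then show ?thesis unfolding c_def using S0 by (simp add: field_simps)
  qed
  define x :: "real \<Rightarrow> real Matrix.vec" where "x t = (1 - exp (-(c*t))) \<cdot>\<^sub>v w" for t
  define d :: "real \<Rightarrow> real Matrix.vec" where "d t = Matrix.vec n (\<lambda>j. c * exp (-(c*t)) * w $ j + (1 - exp (-(c*t))))" for t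
  have dbound: "\<bar>d t $ j\<bar> \<le> 1" if t: "t \<ge> 0" and j: "j < n" for t j
  proof -
    define E where "E = exp (-(c*t))"
    have E: "0 < E" "E \<le> 1" unfolding E_def using c0 t by auto
    have "\<bar>c * w $ j\<bar> < 1" using cw[OF j] c0 by (simp add: abs_mult)
    then have a: "0 < 1 - c * w $ j" "1 - c * w $ j < 2" by (auto simp: abs_less_iff)
    have "0 < E * (1 - c * w $ j)" using E a by simp
    moreover have "E * (1 - c * w $ j) < 2"
    proof -
      have h: "E * (1 - c * w $ j) \<le> 1 * (1 - c * w $ j)"
        by (rule mult_right_mono) (use E a in auto)
      have "1 * (1 - c * w $ j) = 1 - c * w $ j" by simp
      then show ?thesis using h a by linarith
    qed
    moreover have "d t $ j = 1 - E * (1 - c * w $ j)" unfolding d_def E_def using j by (simp add: algebra_simps)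
    ultimately show ?thesis by auto
  qed
  have bd: "bounded_disturbance n d" unfolding bounded_disturbance_def
  proof (intro conjI allI impI)
    fix j assume j: "j < n"
    show "continuous_on {0..} (\<lambda>t. d t $ j)" unfolding d_def using j by (auto intro!: continuous_intros)
  next
    show "\<exists>K. \<forall>t\<ge>0. \<forall>i<n. \<bar>d t $ i\<bar> \<le> K" using dbound by blast
  qed
  have sol: "is_solution n F d x" unfolding is_solution_def
  proof (intro conjI allI impI)
    fix t show "dim_vec (x t) = n" unfolding x_def using w by simp
  next
    show "x 0 = 0\<^sub>v n" unfolding x_def using w by (auto intro!: eq_vecI)
  next
    fix t :: real and j assume t: "t \<ge> 0" and j: "j < n"
    have Fx: "(F *\<^sub>v x t) $ j = 1 - exp (-(c*t))"
      unfolding x_def mult_mat_vec[OF F w(1)] w(2) using j by simp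
    have "((\<lambda>s. x s $ j) has_real_derivative c * exp (-(c*t)) * w $ j) (at t within {0..})"
      unfolding x_def using j w(1) by (auto intro!: derivative_eq_intros)
    moreover have "- (F *\<^sub>v x t) $ j + d t $ j = c * exp (-(c*t)) * w $ j"
      unfolding Fx d_def using j by simp
    ultimately show "((\<lambda>s. x s $ j) has_real_derivative - (F *\<^sub>v x t) $ j + d t $ j) (at t within {0..})"
      by simp
  qed
  have Mx: "Max ((\<lambda>j. SUP s\<in>{0..}. \<bar>d s $ j\<bar>) ` {..<n}) \<le> 1"
  proof -
    have "(SUP s\<in>{0..}. \<bar>d s $ j\<bar>) \<le> 1" if "j < n" for j
      using dbound that by (intro cSUP_least) auto
    then show ?thesis using i by (subst Max_le_iff) auto
  qed
  have bound: "(1 - exp (-(c*t))) * \<bar>w $ i\<bar> \<le> \<gamma>" if t: "t \<ge> 0" for t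
  proof -
    have "\<bar>x t $ i\<bar> \<le> \<gamma> * Max ((\<lambda>j. SUP s\<in>{0..}. \<bar>d s $ j\<bar>) ` {..<n})"
      using rob bd sol t i unfolding gamma_robust_def by blast
    also have "\<dots> \<le> \<gamma>" using Mx g by (simp add: mult_le_cancel_left1)
    finally have "\<bar>x t $ i\<bar> \<le> \<gamma>" .
    moreover have "1 - exp (-(c*t)) \<ge> 0" using c0 t by simp
    ultimately show ?thesis unfolding x_def using i w(1) by (simp add: abs_mult)
  qed
  have lim: "((\<lambda>t. (1 - exp (-(c*t))) * \<bar>w $ i\<bar>) \<longlongrightarrow> \<bar>w $ i\<bar>) at_top"
    using c0 by real_asymp
  show "\<bar>w $ i\<bar> \<le> \<gamma>"
    by (rule tendsto_le[OF _ tendsto_const lim]) (auto intro: eventually_at_top_linorderI[of 0] bound)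
qed



lemma hurwitz_det:
  fixes F :: "real mat"
  assumes F: "F \<in> carrier_mat n n" and h: "hurwitz (- F)" and s: "s \<ge> 0"
  shows "det (F + s \<cdot>\<^sub>m 1\<^sub>m n) \<noteq> 0"
proof
  assume "det (F + s \<cdot>\<^sub>m 1\<^sub>m n) = 0"
  then obtain v :: "real Matrix.vec" where v: "v \<in> carrier_vec n" "v \<noteq> 0\<^sub>v n" "(F + s \<cdot>\<^sub>m 1\<^sub>m n) *\<^sub>v v = 0\<^sub>v n"
    using det_0_iff_vec_prod_zero_field[of "F + s \<cdot>\<^sub>m 1\<^sub>m n" n] F by auto
  have G: "F + s \<cdot>\<^sub>m 1\<^sub>m n \<in> carrier_mat n n" using F by auto
  have row: "(\<Sum>j<n. - F $$ (i,j) * v $ j) = s * v $ i" if i: "i < n" for i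
  proof -
    have "0 = ((F + s \<cdot>\<^sub>m 1\<^sub>m n) *\<^sub>v v) $ i" using v(3) i by simp
    also have "\<dots> = (\<Sum>j<n. (F $$ (i,j) * v $ j + (if i = j then s * v $ j else 0)))"
      unfolding mv[OF G v(1) i] using F i by (intro sum.cong) (auto simp: algebra_simps)
    also have "\<dots> = (\<Sum>j<n. F $$ (i,j) * v $ j) + s * v $ i"
      using i by (simp add: sum.distrib)
    finally show ?thesis by (simp add: sum_negf)
  qed
  define C where "C = map_mat complex_of_real (- F)"
  define cv where "cv = map_vec complex_of_real v"
  have C: "C \<in> carrier_mat n n" using F unfolding C_def by auto
  have cvc: "cv \<in> carrier_vec n" using v unfolding cv_def by auto
  have "eigenvector C cv (complex_of_real s)" unfolding eigenvector_def
  proof (intro conjI)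
    show "cv \<in> carrier_vec (dim_row C)" using C cvc by auto
    obtain i where i: "i < n" "v $ i \<noteq> 0" using v(1,2) by (metis eq_vecI index_zero_vec(1,2) carrier_vecD)
    then show "cv \<noteq> 0\<^sub>v (dim_row C)" using C v(1) unfolding cv_def
      by (metis carrier_matD(1) carrier_vecD index_map_vec(1) index_zero_vec(1) of_real_eq_0_iff)
    show "C *\<^sub>v cv = complex_of_real s \<cdot>\<^sub>v cv"
    proof (rule eq_vecI)
      fix i assume "i < dim_vec (complex_of_real s \<cdot>\<^sub>v cv)"
      then have i: "i < n" using cvc by auto
      have "(C *\<^sub>v cv) $ i = (\<Sum>j<n. complex_of_real (- F $$ (i,j) * v $ j))"
        unfolding mv[OF C cvc i] using F v(1) i by (intro sum.cong) (auto simp: C_def cv_def)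
      also have "\<dots> = complex_of_real (s * v $ i)" unfolding of_real_sum[symmetric] row[OF i] ..
      finally show "(C *\<^sub>v cv) $ i = (complex_of_real s \<cdot>\<^sub>v cv) $ i" using i v(1) by (simp add: cv_def)
    qed (use C cvc in auto)
  qed
  then have "Re (complex_of_real s) < 0" using h unfolding hurwitz_def eigenvalue_def C_def by blast
  then show False using s by simp
qed

lemma rowmin:
  fixes G :: "real mat"
  assumes G: "G \<in> carrier_mat n n"
  and Z: "\<forall>i<n. \<forall>j<n. i \<noteq> j \<longrightarrow> G $$ (i,j) \<le> 0"
  and sol: "G *\<^sub>v Matrix.vec n y = Matrix.vec n (\<lambda>_. 1)"
  and k: "k < n" and mn: "\<forall>j<n. y k \<le> y j"
  shows "1 \<le> (\<Sum>j<n. G $$ (k,j)) * y k"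
proof -
  have "1 = (G *\<^sub>v Matrix.vec n y) $ k" using sol k by simp
  also have "\<dots> = (\<Sum>j<n. G $$ (k,j) * y j)" by (subst mv[OF G _ k]) auto
  also have "\<dots> \<le> (\<Sum>j<n. G $$ (k,j) * y k)"
  proof (rule sum_mono)
    fix j assume j: "j \<in> {..<n}"
    show "G $$ (k,j) * y j \<le> G $$ (k,j) * y k"
    proof (cases "j = k")
      case False
      then show ?thesis using Z k j mn by (auto intro: mult_left_mono_neg)
    qed simp
  qed
  also have "\<dots> = (\<Sum>j<n. G $$ (k,j)) * y k" by (simp add: sum_distrib_right)
  finally show ?thesis .
qed



lemma pos_sol:
  fixes F :: "real mat" and u :: "real Matrix.vec"
  assumes F: "F \<in> carrier_mat n n" and n: "n > 0"
  and Z: "\<forall>i<n. \<forall>j<n. i \<noteq> j \<longrightarrow> F $$ (i,j) \<le> 0"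
  and dt: "\<forall>s\<ge>0. det (F + s \<cdot>\<^sub>m 1\<^sub>m n) \<noteq> 0"
  and u: "u \<in> carrier_vec n" "F *\<^sub>v u = Matrix.vec n (\<lambda>_. 1)"
  shows "\<forall>i<n. u $ i > 0"
proof -
  define G where "G s = F + s \<cdot>\<^sub>m 1\<^sub>m n" for s :: real
  define one :: "real Matrix.vec" where "one = Matrix.vec n (\<lambda>_. 1)"
  have G: "G s \<in> carrier_mat n n" for s using F unfolding G_def by auto
  have Gij: "G s $$ (i,j) = F $$ (i,j) + s * (if i = j then 1 else 0)" if "i < n" "j < n" for s i j
    using F that unfolding G_def by auto
  have dG: "det (G s) \<noteq> 0" if "s \<ge> 0" for s using dt that unfolding G_def by auto
  define v where "v s i = det (replace_col (G s) one i) / det (G s)" for s i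
  have cram: "x $ k = v s k" if s: "s \<ge> 0" and x: "x \<in> carrier_vec n" "G s *\<^sub>v x = one" and k: "k < n" for s x k
  proof -
    have "det (replace_col (G s) (G s *\<^sub>v x) k) = x $ k * det (G s)"
      by (rule cramer_lemma_mat[OF G x(1) k])
    then show ?thesis unfolding v_def x(2) using dG[OF s] by (simp add: field_simps)
  qed
  have sol: "G s *\<^sub>v Matrix.vec n (v s) = one" if s: "s \<ge> 0" for s
  proof -
    have "G s \<in> Units (ring_mat TYPE(real) n ())" by (rule det_non_zero_imp_unit[OF G dG[OF s]])
    then obtain B where B: "B \<in> carrier_mat n n" "G s * B = 1\<^sub>m n"
      unfolding Units_def ring_mat_def by auto
    define x where "x = B *\<^sub>v one"
    have xc: "x \<in> carrier_vec n" unfolding x_def one_def using B by auto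
    have Gx: "G s *\<^sub>v x = one" unfolding x_def
    proof -
      have "G s *\<^sub>v (B *\<^sub>v one) = (G s * B) *\<^sub>v one"
        using assoc_mult_mat_vec[OF G[of s] B(1), of one] by (simp add: one_def)
      then show "G s *\<^sub>v (B *\<^sub>v one) = one" using B(2) by (simp add: one_def)
    qed
    have "Matrix.vec n (v s) = x" using cram[OF s xc Gx] xc by (intro eq_vecI) auto
    then show ?thesis using Gx by simp
  qed
  have cont: "continuous_on {0..} (\<lambda>s. v s i)" if i: "i < n" for i
  proof -
    have c1: "continuous_on {0..} (\<lambda>s. det (G s))"
      by (rule det_cont[OF G]) (auto simp: Gij intro!: continuous_intros)
    have c2: "continuous_on {0..} (\<lambda>s. det (replace_col (G s) one i))"
    proof (rule det_cont)
      show "replace_col (G s) one i \<in> carrier_mat n n" for s using G[of s] by (auto simp: replace_col_def)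
      fix k j assume "k < n" "j < n"
      then have "replace_col (G s) one i $$ (k,j) = (if j = i then 1 else F $$ (k,j) + s * (if k = j then 1 else 0))" for s
        using G[of s] Gij[of k j s] by (auto simp: replace_col_def one_def)
      then show "continuous_on {0..} (\<lambda>s. replace_col (G s) one i $$ (k, j))"
        by (cases "j = i") (auto intro!: continuous_intros)
    qed
    show ?thesis unfolding v_def using c1 c2 dG by (auto intro!: continuous_intros)
  qed
  define m where "m s = Min ((\<lambda>i. v s i) ` {..<n})" for s
  have mcont: "continuous_on {0..} m" unfolding m_def using n cont
    by (intro min_cont[where f = "\<lambda>i s. v s i"]) auto
  have argmin: "\<exists>k<n. v s k = m s \<and> (\<forall>j<n. v s k \<le> v s j)" for s
  proof -
    have "m s \<in> (\<lambda>i. v s i) ` {..<n}" unfolding m_def using n by (intro Min_in) auto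
    then obtain k where k: "k < n" "v s k = m s" by auto
    moreover have "\<forall>j<n. m s \<le> v s j" unfolding m_def by auto
    ultimately show ?thesis by auto
  qed
  have GZ: "\<forall>i<n. \<forall>j<n. i \<noteq> j \<longrightarrow> G s $$ (i,j) \<le> 0" for s using Z Gij by auto
  have rs: "(\<Sum>j<n. G s $$ (k,j)) = (\<Sum>j<n. F $$ (k,j)) + s" if "k < n" for s k
    using that by (simp add: Gij sum.distrib if_distrib[of "\<lambda>x. s * x"] cong: if_cong)
  have key: "1 \<le> ((\<Sum>j<n. F $$ (k,j)) + s) * m s \<and> k < n" if s: "s \<ge> 0" and k: "k < n" "v s k = m s" "\<forall>j<n. v s k \<le> v s j" for s k
    using rowmin[OF G[of s] GZ[of s] sol[OF s, unfolded one_def] k(1)] k rs[OF k(1)] by auto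
  have mne: "m s \<noteq> 0" if s: "s \<ge> 0" for s
    using argmin[of s] key[OF s] by fastforce
  define S where "S = 1 + (\<Sum>k<n. \<Sum>j<n. \<bar>F $$ (k,j)\<bar>)"
  have S0: "S \<ge> 0" unfolding S_def by (simp add: sum_nonneg add_nonneg_nonneg)
  have rpos: "(\<Sum>j<n. F $$ (k,j)) + S > 0" if k: "k < n" for k
  proof -
    have "- (\<Sum>j<n. \<bar>F $$ (k,j)\<bar>) \<le> (\<Sum>j<n. F $$ (k,j))"
      by (simp add: sum_negf[symmetric] sum_mono)
    moreover have "(\<Sum>j<n. \<bar>F $$ (k,j)\<bar>) \<le> (\<Sum>k<n. \<Sum>j<n. \<bar>F $$ (k,j)\<bar>)"
      using k by (intro member_le_sum) (auto intro: sum_nonneg)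
    ultimately show ?thesis unfolding S_def by linarith
  qed
  have mS: "m S > 0"
  proof -
    obtain k where k: "k < n" "v S k = m S" "\<forall>j<n. v S k \<le> v S j" using argmin by blast
    have "1 \<le> ((\<Sum>j<n. F $$ (k,j)) + S) * m S" using key[OF S0 k] by auto
    then show ?thesis using rpos[OF k(1)] by (metis not_less mult_nonneg_nonpos order.trans not_one_le_zero less_le)
  qed
  have m0: "m 0 > 0"
  proof (rule ccontr)
    assume "\<not> m 0 > 0"
    then have "m 0 \<le> 0" by simp
    moreover have "continuous_on {0..S} m" by (rule continuous_on_subset[OF mcont]) auto
    ultimately obtain x where "0 \<le> x" "x \<le> S" "m x = 0"
      using IVT'[of m 0 0 S] mS S0 by auto
    then show False using mne by auto
  qed
  have G0: "G 0 = F" unfolding G_def using F by auto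
  show ?thesis
  proof (intro allI impI)
    fix i assume i: "i < n"
    have "u $ i = v 0 i" using cram[of 0 u i] u i G0 by (simp add: one_def)
    also have "\<dots> \<ge> m 0" unfolding m_def using i by auto
    finally show "u $ i > 0" using m0 by linarith
  qed
qed



lemma hurwitz_block:
  fixes F Fb :: "real mat"
  assumes F: "F \<in> carrier_mat n n" and h: "hurwitz (- F)" and a: "aN1 > 0"
  and Fb: "Fb \<in> carrier_mat (n+1) (n+1)"
  and Fbij: "\<forall>i<n+1. \<forall>j<n+1. Fb $$ (i,j) = (if i < n \<and> j < n then F $$ (i,j) else if i = n \<and> j = n then aN1 else 0)"
  shows "hurwitz (- Fb)"
  unfolding hurwitz_def
proof (intro allI impI)
  fix z assume "eigenvalue (map_mat complex_of_real (- Fb)) z"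
  then obtain w where w: "w \<in> carrier_vec (n+1)" "w \<noteq> 0\<^sub>v (n+1)"
    "map_mat complex_of_real (- Fb) *\<^sub>v w = z \<cdot>\<^sub>v w"
    unfolding eigenvalue_def eigenvector_def using Fb by auto
  define C where "C = map_mat complex_of_real (- Fb)"
  have C: "C \<in> carrier_mat (n+1) (n+1)" using Fb unfolding C_def by auto
  have row: "(C *\<^sub>v w) $ i = (\<Sum>j<n. complex_of_real (- F $$ (i,j)) * w $ j)" if i: "i < n" for i
  proof -
    have "(C *\<^sub>v w) $ i = (\<Sum>j<Suc n. C $$ (i,j) * w $ j)" using mv[OF C w(1)] i by simp
    also have "\<dots> = (\<Sum>j<n. C $$ (i,j) * w $ j) + C $$ (i,n) * w $ n" by simp
    also have "C $$ (i,n) = 0" using Fb Fbij i unfolding C_def by auto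
    also have "(\<Sum>j<n. C $$ (i,j) * w $ j) = (\<Sum>j<n. complex_of_real (- F $$ (i,j)) * w $ j)"
      using Fb Fbij i unfolding C_def by (intro sum.cong) auto
    finally show ?thesis by simp
  qed
  have rown: "(C *\<^sub>v w) $ n = complex_of_real (- aN1) * w $ n"
  proof -
    have "(C *\<^sub>v w) $ n = (\<Sum>j<Suc n. C $$ (n,j) * w $ j)" using mv[OF C w(1)] by simp
    also have "\<dots> = (\<Sum>j<n. C $$ (n,j) * w $ j) + C $$ (n,n) * w $ n" by simp
    also have "(\<Sum>j<n. C $$ (n,j) * w $ j) = 0"
      using Fb Fbij unfolding C_def by (intro sum.neutral) auto
    also have "C $$ (n,n) = complex_of_real (- aN1)" using Fb Fbij unfolding C_def by auto
    finally show ?thesis by simp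
  qed
  have eq: "(C *\<^sub>v w) $ i = z * w $ i" if "i < n+1" for i
    using w(3) that w(1) unfolding C_def by (metis carrier_vecD index_smult_vec(1))
  show "Re z < 0"
  proof (cases "\<exists>i<n. w $ i \<noteq> 0")
    case True
    define w1 where "w1 = Matrix.vec n (\<lambda>i. w $ i)"
    have "eigenvector (map_mat complex_of_real (- F)) w1 z" unfolding eigenvector_def
    proof (intro conjI)
      show "w1 \<in> carrier_vec (dim_row (map_mat complex_of_real (- F)))" using F unfolding w1_def by auto
      show "w1 \<noteq> 0\<^sub>v (dim_row (map_mat complex_of_real (- F)))"
        using True F unfolding w1_def by (auto simp: vec_eq_iff)
      show "map_mat complex_of_real (- F) *\<^sub>v w1 = z \<cdot>\<^sub>v w1"
      proof (rule eq_vecI)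
        fix i assume "i < dim_vec (z \<cdot>\<^sub>v w1)"
        then have i: "i < n" unfolding w1_def by simp
        have Cm: "map_mat complex_of_real (- F) \<in> carrier_mat n n" using F by auto
        have "(map_mat complex_of_real (- F) *\<^sub>v w1) $ i = (\<Sum>j<n. complex_of_real (- F $$ (i,j)) * w $ j)"
          unfolding mv[OF Cm _ i, of w1, unfolded w1_def, OF vec_carrier, folded w1_def]
          using F i by (intro sum.cong) (auto simp: w1_def)
        also have "\<dots> = z * w $ i" using row[OF i] eq[of i] i by simp
        finally show "(map_mat complex_of_real (- F) *\<^sub>v w1) $ i = (z \<cdot>\<^sub>v w1) $ i" using i by (simp add: w1_def)
      qed (use F in \<open>auto simp: w1_def\<close>)
    qed
    then show ?thesis using h unfolding hurwitz_def eigenvalue_def by blast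
  next
    case False
    have "w $ n \<noteq> 0"
    proof
      assume "w $ n = 0"
      then have "w = 0\<^sub>v (n+1)" using False w(1) by (intro eq_vecI) (auto simp: less_Suc_eq)
      then show False using w(2) by simp
    qed
    moreover have "complex_of_real (- aN1) * w $ n = z * w $ n" using rown eq[of n] by simp
    ultimately have "z = complex_of_real (- aN1)" by (metis mult_right_cancel)
    then show ?thesis using a by simp
  qed
qed

lemma robust_of:
  fixes F :: "real mat" and w :: "real Matrix.vec"
  assumes F: "F \<in> carrier_mat n n" and n: "n > 0"
  and Z: "\<forall>i<n. \<forall>j<n. i \<noteq> j \<longrightarrow> F $$ (i,j) \<le> 0"
  and w: "w \<in> carrier_vec n" "\<forall>i<n. w $ i > 0" "F *\<^sub>v w = Matrix.vec n (\<lambda>_. 1)"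
  and h: "hurwitz (- F)" and g: "\<forall>i<n. w $ i \<le> \<gamma>"
  shows "gamma_robust n F \<gamma>"
  unfolding gamma_robust_def
proof (intro conjI h allI impI)
  fix d x t i assume bd: "bounded_disturbance n d" and sol: "is_solution n F d x" and t: "(t::real) \<ge> 0" and i: "i < n"
  define D where "D = Max ((\<lambda>j. SUP s\<in>{0..}. \<bar>d s $ j\<bar>) ` {..<n})"
  have D0: "D \<ge> 0" using sup_bounds[OF bd order_refl n] unfolding D_def by linarith
  have "\<bar>x t $ i\<bar> \<le> w $ i * D" using robust_bound[OF F n Z w bd sol] t i unfolding D_def by blast
  also have "\<dots> \<le> \<gamma> * D" using g i D0 by (intro mult_right_mono) auto
  finally show "\<bar>x t $ i\<bar> \<le> \<gamma> * D" .
qed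



theorem mainTheorem6:
  fixes N :: nat and a :: "nat \<Rightarrow> real" and M :: "real mat"
    and \<gamma> aN1 :: real and u :: "real vec"
  assumes N: "N \<ge> 1"
    and a_pos: "\<forall>i<N. a i > 0"
    and M_dim: "M \<in> carrier_mat N N"
    and M_diag: "\<forall>i<N. M $$ (i, i) = 0"
    and M_nonneg: "\<forall>i<N. \<forall>j<N. M $$ (i, j) \<ge> 0"
    and \<gamma>_pos: "\<gamma> > 0"
    and robust: "gamma_robust N (mat_diag N a - M) \<gamma>"
    and u_dim: "u \<in> carrier_vec N"
    and u_def: "(mat_diag N a - M) *\<^sub>v u = vec N (\<lambda>_. 1)"
    and aN1_pos: "aN1 > 0"
  shows "scalable N (mat_diag N a - M) (N + 1)
           (four_block_mat (mat_diag N a) (0\<^sub>m N 1) (0\<^sub>m 1 N) (mat 1 1 (\<lambda>_. aN1))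
            - four_block_mat M (0\<^sub>m N 1) (0\<^sub>m 1 N) (0\<^sub>m 1 1))
         \<longleftrightarrow> aN1 \<ge> 1 / Max {u $ i | i. i < N}"
proof -
  define F where "F = mat_diag N a - M"
  define Fb where "Fb = four_block_mat (mat_diag N a) (0\<^sub>m N 1) (0\<^sub>m 1 N) (mat 1 1 (\<lambda>_. aN1))
            - four_block_mat M (0\<^sub>m N 1) (0\<^sub>m 1 N) (0\<^sub>m 1 1)"
  have n: "N > 0" using N by simp
  have F: "F \<in> carrier_mat N N" unfolding F_def using M_dim by auto
  have Fij: "F $$ (i,j) = (if i = j then a i else 0) - M $$ (i,j)" if "i < N" "j < N" for i j
    unfolding F_def using M_dim that by (auto simp: mat_diag_def)
  have FZ: "\<forall>i<N. \<forall>j<N. i \<noteq> j \<longrightarrow> F $$ (i,j) \<le> 0" using Fij M_nonneg by auto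
  have Fb: "Fb \<in> carrier_mat (N+1) (N+1)" unfolding Fb_def using M_dim by auto
  have Fbij: "\<forall>i<N+1. \<forall>j<N+1. Fb $$ (i,j) = (if i < N \<and> j < N then F $$ (i,j) else if i = N \<and> j = N then aN1 else 0)"
    unfolding Fb_def F_def using M_dim by (auto simp: mat_diag_def)
  have FbZ: "\<forall>i<N+1. \<forall>j<N+1. i \<noteq> j \<longrightarrow> Fb $$ (i,j) \<le> 0" using Fbij FZ by auto
  have hF: "hurwitz (- F)" using robust unfolding gamma_robust_def F_def by auto
  have hFb: "hurwitz (- Fb)" by (rule hurwitz_block[OF F hF aN1_pos Fb Fbij])
  have uF: "F *\<^sub>v u = Matrix.vec N (\<lambda>_. 1)" using u_def unfolding F_def .
  have upos: "\<forall>i<N. u $ i > 0"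
    by (rule pos_sol[OF F n FZ _ u_dim uF]) (use hurwitz_det[OF F hF] in auto)
  define wb :: "real Matrix.vec" where "wb = Matrix.vec (N+1) (\<lambda>i. if i < N then u $ i else 1 / aN1)"
  have wbc: "wb \<in> carrier_vec (N+1)" unfolding wb_def by simp
  have wbpos: "\<forall>i<N+1. wb $ i > 0" using upos aN1_pos unfolding wb_def by auto
  have Fbw: "Fb *\<^sub>v wb = Matrix.vec (N+1) (\<lambda>_. 1)"
  proof (rule eq_vecI)
    fix i assume "i < dim_vec (Matrix.vec (N+1) (\<lambda>_. 1::real))"
    then have i: "i < N+1" by simp
    have "(Fb *\<^sub>v wb) $ i = (\<Sum>j<Suc N. Fb $$ (i,j) * wb $ j)" using mv[OF Fb wbc i] by simp
    also have "\<dots> = (\<Sum>j<N. Fb $$ (i,j) * wb $ j) + Fb $$ (i,N) * wb $ N" by simp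
    also have "\<dots> = 1"
    proof (cases "i < N")
      case True
      have "(\<Sum>j<N. Fb $$ (i,j) * wb $ j) = (\<Sum>j<N. F $$ (i,j) * u $ j)"
        using Fbij True by (intro sum.cong) (auto simp: wb_def)
      also have "\<dots> = (F *\<^sub>v u) $ i" using mv[OF F u_dim True] by simp
      also have "\<dots> = 1" using uF True by simp
      finally show ?thesis using Fbij True by simp
    next
      case False
      then have iN: "i = N" using i by simp
      have "(\<Sum>j<N. Fb $$ (i,j) * wb $ j) = 0" using Fbij iN by (intro sum.neutral) auto
      then show ?thesis using Fbij iN aN1_pos by (simp add: wb_def)
    qed
    finally show "(Fb *\<^sub>v wb) $ i = Matrix.vec (N+1) (\<lambda>_. 1) $ i" using i by simp
  qed (use Fb in auto)
  define MU where "MU = Max {u $ i | i. i < N}"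
  have MUset: "{u $ i | i. i < N} = (\<lambda>i. u $ i) ` {..<N}" by auto
  have MUge: "u $ i \<le> MU" if "i < N" for i unfolding MU_def MUset using that by (intro Max_ge) auto
  have MUpos: "MU > 0" using MUge[of 0] upos n by fastforce
  have eqv: "1 / MU \<le> aN1 \<longleftrightarrow> 1 / aN1 \<le> MU" using MUpos aN1_pos by (auto simp: field_simps)
  show ?thesis unfolding F_def[symmetric] Fb_def[symmetric] MU_def[symmetric] eqv scalable_def
  proof
    assume sc: "\<forall>\<gamma>>0. gamma_robust N F \<gamma> \<longrightarrow> gamma_robust (N + 1) Fb \<gamma>"
    have "gamma_robust N F MU" by (rule robust_of[OF F n FZ u_dim upos uF hF]) (use MUge in auto)
    then have "gamma_robust (N+1) Fb MU" using sc MUpos by blast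
    then have "\<bar>wb $ N\<bar> \<le> MU" using lower[OF Fb wbc Fbw _ MUpos] by auto
    then show "1 / aN1 \<le> MU" unfolding wb_def using aN1_pos by simp
  next
    assume le: "1 / aN1 \<le> MU"
    show "\<forall>\<gamma>>0. gamma_robust N F \<gamma> \<longrightarrow> gamma_robust (N + 1) Fb \<gamma>"
    proof (intro allI impI)
      fix g :: real assume g: "g > 0" and rg: "gamma_robust N F g"
      have "\<forall>i<N. \<bar>u $ i\<bar> \<le> g" by (rule lower[OF F u_dim uF rg g])
      then have "MU \<le> g" unfolding MU_def MUset using n by (subst Max_le_iff) auto
      then have "\<forall>i<N+1. wb $ i \<le> g" using le MUge unfolding wb_def
        by (auto simp: less_Suc_eq) (meson order_trans)+
      then show "gamma_robust (N + 1) Fb g" by (rule robust_of[OF Fb _ FbZ wbc wbpos Fbw hFb, OF zero_less_Suc[of N, unfolded Suc_eq_plus1]])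
    qed
  qed
qed


end
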